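(* Let $p$ be an odd prime and $\alpha$ an indeterminate over $\mathbb F_p$. The coefficients of the polynomial \[ G^{(\alpha)}(X)=-\sum_{k=1}^{p-1}\frac{1}{k}\,\frac{X^{k}}{\prod_{s=1}^{k-1}b_{1,s}(\alpha)}\in\mathbb F_p(\alpha)[X] \] (empty product equal to $1$) belong to the subring $\mathbb F_p[\alpha,(\alpha^{p-1}-1)^{-1}]$ of $\mathbb F_p(\alpha)$.
   Context: $\mathbb F_p$ is the field of $p$ elements, $\binom{x}{m}=x(x-1)\cdots(x-m+1)/m!$. For integers $0<r,s<p$ (interpreted as elements of $\mathbb F_p$), $b_{r,s}(\alpha)=\sum_{k=0}^{p-1}(-r/s)^k\binom{r\alpha-1}{p-1-k}\binom{s\alpha-1}{k}\in\mathbb F_p[\alpha]$. *)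

theory Defs
  imports "HOL-Computational_Algebra.Polynomial" "HOL-Computational_Algebra.Fraction_Field"
begin

text \<open>Binomial polynomial binom(x,m) = x(x-1)...(x-m+1)/m!, for x a polynomial over a field
  (used only for m < p = char, so m! is invertible).\<close>
definition pbinom :: "'a::field poly \<Rightarrow> nat \<Rightarrow> 'a poly" where
  "pbinom x m = smult (inverse (of_nat (fact m))) (\<Prod>i<m. x - of_nat i)"

definition alpha :: "'a::field poly" where
  "alpha = [:0, 1:]"

definition bpoly :: "nat \<Rightarrow> nat \<Rightarrow> nat \<Rightarrow> 'a::field poly" where
  "bpoly p r s = (\<Sum>k = 0..p-1.
      smult ((- (of_nat r / of_nat s)) ^ k)
        (pbinom (smult (of_nat r) alpha - 1) (p - 1 - k) * pbinom (smult (of_nat s) alpha - 1) k))"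

definition emb :: "'a::field poly \<Rightarrow> 'a poly fract" where
  "emb f = Fract f 1"

definition Gpoly :: "nat \<Rightarrow> ('a::field poly fract) poly" where
  "Gpoly p = - (\<Sum>k = 1..p-1.
      monom (inverse (of_nat k) / (\<Prod>s = 1..k-1. emb (bpoly p 1 s))) k)"

definition loc_ring :: "nat \<Rightarrow> ('a::field poly fract) set" where
  "loc_ring p = {Fract f ((alpha ^ (p - 1) - 1) ^ n) | f n. True}"

end

theory Submission
  imports Defs "HOL-Computational_Algebra.Formal_Power_Series"
begin


lemma finite_card_UNIV: "card (UNIV::'a set) = p \<Longrightarrow> prime p \<Longrightarrow> finite (UNIV::'a set)"
  by (metis card.infinite not_prime_0)

lemma char_p:
  assumes "card (UNIV::'a::field set) = p" "prime p"
  shows "of_nat p = (0::'a)"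
proof -
  have fin: "finite (UNIV::'a set)" using finite_card_UNIV assms by blast
  have "(\<Sum>x\<in>(UNIV::'a set). x + 1) = (\<Sum>x\<in>UNIV. x)"
    by (rule sum.reindex_bij_witness[of _ "\<lambda>x. x - 1" "\<lambda>x. x + 1"]) auto
  moreover have "(\<Sum>x\<in>(UNIV::'a set). x + 1) = (\<Sum>x\<in>UNIV. x) + of_nat p"
    using assms by (simp add: sum.distrib)
  ultimately show ?thesis by simp
qed

lemma char_nz:
  assumes "card (UNIV::'a::field set) = p" "prime p" "0 < j" "j < p"
  shows "of_nat j \<noteq> (0::'a)"
proof
  assume j0: "of_nat j = (0::'a)"
  have "\<not> p dvd j" using assms by (meson nat_dvd_not_less)
  hence "coprime p j" using assms prime_imp_coprime by blast
  hence "gcd (int j) (int p) = 1" by (simp add: coprime_commute)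
  then obtain u v :: int where "u * int j + v * int p = 1"
    by (metis bezout_int)
  hence "of_int (u * int j + v * int p) = (1::'a)" by simp
  hence "(of_int u * of_nat j + of_int v * of_nat p :: 'a) = 1" by simp
  thus False using j0 char_p[OF assms(1,2)] by simp
qed

lemma fermat_field:
  assumes "card (UNIV::'a::field set) = p" "prime p" "(a::'a) \<noteq> 0"
  shows "a ^ (p - 1) = 1"
proof -
  have fin: "finite (UNIV::'a set)" using finite_card_UNIV assms by blast
  let ?S = "UNIV - {0::'a}"
  have cS: "card ?S = p - 1" using assms fin by (simp add: card_Diff_singleton)
  have "(\<Prod>x\<in>?S. a * x) = (\<Prod>x\<in>?S. x)"
    by (rule prod.reindex_bij_witness[of _ "\<lambda>x. x / a" "\<lambda>x. a * x"]) (use assms in auto)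
  moreover have "(\<Prod>x\<in>?S. a * x) = a ^ (p - 1) * (\<Prod>x\<in>?S. x)"
    using cS by (simp add: prod.distrib)
  moreover have "(\<Prod>x\<in>?S. x) \<noteq> 0" using fin by simp
  ultimately show ?thesis by simp
qed

lemma fact_nz:
  assumes "\<And>j. 0 < j \<Longrightarrow> j < p \<Longrightarrow> of_nat j \<noteq> (0::'a::field)" "m < p"
  shows "of_nat (fact m) \<noteq> (0::'a)"
  using assms(2)
proof (induction m)
  case (Suc m)
  have "(of_nat (fact (Suc m)) :: 'a) = of_nat (Suc m) * of_nat (fact m)"
    by (simp only: fact_Suc of_nat_id of_nat_mult)
  then show ?case using Suc assms(1)[of "Suc m"] by (simp del: of_nat_Suc fact_Suc)
qed simp

lemma pbinom_step:
  assumes "of_nat (Suc m) \<noteq> (0::'a::field)" "of_nat (fact m) \<noteq> (0::'a)"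
  shows "smult (of_nat (Suc m)) (pbinom (x::'a poly) (Suc m)) = (x - of_nat m) * pbinom x m"
proof -
  have c: "(of_nat (Suc m)::'a) * inverse (of_nat (fact (Suc m))) = inverse (of_nat (fact m))"
  proof -
    have "(of_nat (fact (Suc m)) :: 'a) = of_nat (Suc m) * of_nat (fact m)"
      by (simp only: fact_Suc of_nat_id of_nat_mult)
    thus ?thesis using assms by (simp add: field_simps del: of_nat_Suc)
  qed
  have "smult (of_nat (Suc m)) (pbinom x (Suc m))
      = smult ((of_nat (Suc m)::'a) * inverse (of_nat (fact (Suc m)))) ((\<Prod>i<m. x - of_nat i) * (x - of_nat m))"
    unfolding pbinom_def by (simp only: smult_smult prod.lessThan_Suc)
  also have "\<dots> = (x - of_nat m) * pbinom x m"
    unfolding c pbinom_def by (simp add: mult_ac)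
  finally show ?thesis .
qed

lemma vanish_mult:
  assumes "\<And>m. m \<le> N \<Longrightarrow> fps_nth F m = (0::'b::comm_ring_1)"
  shows "m \<le> N \<Longrightarrow> fps_nth (F * G) m = 0" "m \<le> N \<Longrightarrow> fps_nth (G * F) m = 0"
  using assms by (auto simp: fps_mult_nth intro!: sum.neutral)

lemma EA_vanish:
  assumes "\<And>j. 0 < j \<Longrightarrow> j < p \<Longrightarrow> of_nat j \<noteq> (0::'a::field)" "m + 2 \<le> p"
  shows "fps_nth ((1 + fps_X) * fps_deriv (Abs_fps (\<lambda>m. pbinom (u::'a poly) m))
           - fps_const u * Abs_fps (\<lambda>m. pbinom u m)) m = 0"
proof -
  have nz: "of_nat (Suc m) \<noteq> (0::'a)" using assms(1)[of "Suc m"] assms(2) by (simp del: of_nat_Suc)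
  have nz2: "of_nat (fact m) \<noteq> (0::'a)" using fact_nz[OF assms(1)] assms(2) by simp
  have "of_nat (Suc m) * pbinom u (Suc m) = (u - of_nat m) * pbinom u m"
    using pbinom_step[OF nz nz2, of u] by (simp add: of_nat_poly)
  thus ?thesis by (cases m) (auto simp: algebra_simps)
qed


lemma EB_vanish:
  assumes "\<And>j. 0 < j \<Longrightarrow> j < p \<Longrightarrow> of_nat j \<noteq> (0::'a::field)" "m + 2 \<le> p"
  shows "fps_nth ((1 + fps_const Y * fps_X) * fps_deriv (Abs_fps (\<lambda>k. Y ^ k * pbinom (v::'a poly) k))
           - fps_const (Y * v) * Abs_fps (\<lambda>k. Y ^ k * pbinom v k)) m = 0"
proof -
  have nz: "of_nat (Suc m) \<noteq> (0::'a)" using assms(1)[of "Suc m"] assms(2) by (simp del: of_nat_Suc)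
  have nz2: "of_nat (fact m) \<noteq> (0::'a)" using fact_nz[OF assms(1)] assms(2) by simp
  have e: "of_nat (Suc m) * pbinom v (Suc m) = (v - of_nat m) * pbinom v m"
    using pbinom_step[OF nz nz2, of v] by (simp add: of_nat_poly)
  show ?thesis
  proof (cases m)
    case 0
    then show ?thesis using e by (simp add: algebra_simps)
  next
    case (Suc k)
    have h: "of_nat (Suc k) * pbinom v (Suc k) + of_nat (Suc (Suc k)) * pbinom v (Suc (Suc k))
       = v * pbinom v (Suc k)"
      using e Suc by (simp add: algebra_simps)
    have "Y * (Y * (Y ^ k * (of_nat (Suc k) * pbinom v (Suc k) + of_nat (Suc (Suc k)) * pbinom v (Suc (Suc k)))))
       = Y * (Y * (Y ^ k * (v * pbinom v (Suc k))))" by (simp only: h)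
    then show ?thesis using Suc by (simp add: algebra_simps)
  qed
qed


lemma ring_id:
  fixes X A B dA dB cu cv cY :: "'b::comm_ring_1"
  shows "(1+X)*(1+cY*X)*(A*dB + dA*B) - ((cu + cY*cv) + (cY*(cu+cv))*X)*(A*B)
   = (1+cY*X)*B*((1+X)*dA - cu*A) + (1+X)*A*((1+cY*X)*dB - (cY*cv)*B)"
  by (simp add: algebra_simps)

lemma recur:
  fixes u v Y :: "'a::field poly"
  assumes nz: "\<And>j. 0 < j \<Longrightarrow> j < p \<Longrightarrow> of_nat j \<noteq> (0::'a)" and N: "N + 2 \<le> p"
  defines "A \<equiv> Abs_fps (\<lambda>m. pbinom u m)" and "B \<equiv> Abs_fps (\<lambda>k. Y ^ k * pbinom v k)"
  shows "fps_nth ((1 + fps_X) * (1 + fps_const Y * fps_X) * fps_deriv (A * B)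
              - (fps_const (u + Y * v) + fps_const (Y * (u + v)) * fps_X) * (A * B)) N = 0"
proof -
  define EA where "EA = (1 + fps_X) * fps_deriv A - fps_const u * A"
  define EB where "EB = (1 + fps_const Y * fps_X) * fps_deriv B - fps_const (Y * v) * B"
  have id: "(1 + fps_X) * (1 + fps_const Y * fps_X) * fps_deriv (A * B)
              - (fps_const (u + Y * v) + fps_const (Y * (u + v)) * fps_X) * (A * B)
          = (1 + fps_const Y * fps_X) * B * EA + (1 + fps_X) * A * EB"
    unfolding EA_def EB_def fps_deriv_mult fps_const_add[symmetric] fps_const_mult[symmetric] by (rule ring_id)
  have ea: "fps_nth EA m = 0" if "m \<le> N" for m
    unfolding EA_def A_def using EA_vanish[OF nz, where m=m and u=u] that N by simp
  have eb: "fps_nth EB m = 0" if "m \<le> N" for m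
    unfolding EB_def B_def using EB_vanish[OF nz, where m=m and Y=Y and v=v] that N by simp
  show ?thesis unfolding id
    using vanish_mult(2)[OF ea, of N] vanish_mult(2)[OF eb, of N] by simp
qed


lemma ring_id2:
  fixes X D H c0 c1 cY :: "'b::comm_ring_1"
  shows "(1 + X) * (1 + cY * X) * D - (c0 + c1 * X) * H
     = D + (1 + cY) * (X * D) + cY * (X * (X * D)) - c0 * H - c1 * (X * H)"
  by (simp add: algebra_simps)

lemma recur_coeff:
  fixes u v Y :: "'a::field poly"
  assumes nz: "\<And>j. 0 < j \<Longrightarrow> j < p \<Longrightarrow> of_nat j \<noteq> (0::'a)" and N: "N + 2 \<le> p"
  defines "h \<equiv> fps_nth (Abs_fps (\<lambda>m. pbinom u m) * Abs_fps (\<lambda>k. Y ^ k * pbinom v k))"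
  shows "N = 0 \<Longrightarrow> h 1 = (u + Y * v) * h 0"
    and "N = Suc M \<Longrightarrow> of_nat (M + 2) * h (M + 2) + (1 + Y) * of_nat (M + 1) * h (M + 1) + Y * of_nat M * h M
          = (u + Y * v) * h (M + 1) + Y * (u + v) * h M"
proof -
  define H where "H = Abs_fps (\<lambda>m. pbinom u m) * Abs_fps (\<lambda>k. Y ^ k * pbinom v k)"
  have hH: "h = fps_nth H" unfolding h_def H_def ..
  have r0: "fps_nth ((1 + fps_X) * (1 + fps_const Y * fps_X) * fps_deriv H
              - (fps_const (u + Y * v) + fps_const (Y * (u + v)) * fps_X) * H) N = 0"
    unfolding H_def by (rule recur[OF nz N])
  have c: "1 + fps_const Y = fps_const (1 + Y)" by (metis fps_const_1_eq_1 fps_const_add)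
  note r = r0[unfolded ring_id2 c]
  have r2: "fps_nth (fps_deriv H) N + (1 + Y) * fps_nth (fps_X * fps_deriv H) N
     + Y * fps_nth (fps_X * (fps_X * fps_deriv H)) N - (u + Y * v) * fps_nth H N
     - (Y * (u + v)) * fps_nth (fps_X * H) N = 0"
    using r by (simp only: fps_sub_nth fps_add_nth fps_mult_left_const_nth)
  show "N = 0 \<Longrightarrow> h 1 = (u + Y * v) * h 0" using r2 unfolding hH by simp
  show "N = Suc M \<Longrightarrow> of_nat (M + 2) * h (M + 2) + (1 + Y) * of_nat (M + 1) * h (M + 1) + Y * of_nat M * h M
          = (u + Y * v) * h (M + 1) + Y * (u + v) * h M"
    using r2 unfolding hH by (cases M) (simp_all add: algebra_simps)
qed



lemma deg_bound:
  fixes u v Y :: "'a::field poly"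
  assumes nz: "\<And>j. 0 < j \<Longrightarrow> j < p \<Longrightarrow> of_nat j \<noteq> (0::'a)"
    and d1: "degree (u + Y * v) = 0" and dY: "degree Y = 0" and d2: "degree (Y * (u + v)) \<le> 1"
  defines "h \<equiv> fps_nth (Abs_fps (\<lambda>m. pbinom u m) * Abs_fps (\<lambda>k. Y ^ k * pbinom v k))"
  shows "N + 1 \<le> p \<Longrightarrow> degree (h N) \<le> N div 2"
proof (induction N rule: less_induct)
  case (less N)
  show ?case
  proof (cases N)
    case 0
    then show ?thesis by (simp add: h_def pbinom_def)
  next
    case (Suc M)
    show ?thesis
    proof (cases M)
      case 0
      have "h 1 = (u + Y * v) * h 0" unfolding h_def by (rule recur_coeff(1)[OF nz, where N=0]) (use less Suc 0 in auto)
      moreover have "h 0 = 1" by (simp add: h_def pbinom_def)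
      ultimately show ?thesis using d1 Suc 0 by simp
    next
      case (Suc K)
      have NK: "N = K + 2" using Suc \<open>N = Suc M\<close> by simp
      have r: "of_nat (K + 2) * h (K + 2) + (1 + Y) * of_nat (K + 1) * h (K + 1) + Y * of_nat K * h K
          = (u + Y * v) * h (K + 1) + Y * (u + v) * h K"
        unfolding h_def by (rule recur_coeff(2)[OF nz, where N="Suc K"]) (use less NK in auto)
      have ih1: "degree (h (K+1)) \<le> (K+1) div 2" using less NK by auto
      have ih2: "degree (h K) \<le> K div 2" using less NK by auto
      have e: "smult (of_nat (K+2)) (h (K+2)) = (u + Y * v - (1 + Y) * of_nat (K + 1)) * h (K + 1)
                 + (Y * (u + v) - Y * of_nat K) * h K"
        using r by (simp add: of_nat_poly algebra_simps)
      have dof: "degree (of_nat k :: 'a poly) = 0" for k by (simp add: of_nat_poly)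
      have d1Y: "degree (1 + Y) \<le> 0" using dY by (intro degree_add_le) auto
      have "degree ((1 + Y) * of_nat (K + 1)) \<le> 0"
        using degree_mult_le[of "1 + Y" "of_nat (K + 1)"] d1Y dof[of "K+1"] by simp
      hence dc1: "degree (u + Y * v - (1 + Y) * of_nat (K + 1)) = 0"
        using d1 degree_diff_le[of "u + Y * v" 0 "(1 + Y) * of_nat (K + 1)"] by simp
      have "degree (Y * of_nat K) \<le> 1"
        using degree_mult_le[of Y "of_nat K"] dY dof[of K] by simp
      hence dc2: "degree (Y * (u + v) - Y * of_nat K) \<le> 1"
        using d2 degree_diff_le[of "Y * (u + v)" 1 "Y * of_nat K"] by simp
      have "degree ((u + Y * v - (1 + Y) * of_nat (K + 1)) * h (K + 1)) \<le> (K+1) div 2"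
        using degree_mult_le[of "u + Y * v - (1 + Y) * of_nat (K + 1)" "h (K+1)"] dc1 ih1 by simp
      moreover have "degree ((Y * (u + v) - Y * of_nat K) * h K) \<le> (K+2) div 2"
        using degree_mult_le[of "Y * (u + v) - Y * of_nat K" "h K"] dc2 ih2 by simp
      moreover have "(K+1) div 2 \<le> (K+2) div 2" by simp
      ultimately have "degree (smult (of_nat (K+2)) (h (K+2))) \<le> (K+2) div 2"
        unfolding e by (intro degree_add_le) auto
      moreover have "(of_nat (K+2) :: 'a) \<noteq> 0" using nz[of "K+2"] less NK by simp
      ultimately show ?thesis using NK by simp
    qed
  qed
qed


lemma const_pow: "[:c:] ^ k = [:(c::'a::comm_ring_1) ^ k:]"
  by (induction k) (simp_all add: pCons_one[symmetric])

lemma bpoly_eq_h: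
  fixes s :: nat
  defines "y \<equiv> - (of_nat 1 / of_nat s) :: 'a::field"
  shows "bpoly p 1 s = fps_nth (Abs_fps (\<lambda>m. pbinom (alpha - 1) m)
            * Abs_fps (\<lambda>k. [:y:] ^ k * pbinom (smult (of_nat s) alpha - 1) k)) (p - 1)"
proof -
  let ?n = "p - 1"
  let ?f = "\<lambda>i. pbinom (alpha - 1) i * ([:y:] ^ (?n - i) * pbinom (smult (of_nat s) alpha - 1) (?n - i))"
  have "fps_nth (Abs_fps (\<lambda>m. pbinom (alpha - 1) m)
            * Abs_fps (\<lambda>k. [:y:] ^ k * pbinom (smult (of_nat s) alpha - 1) k)) ?n = sum ?f {0..?n}"
    by (simp add: fps_mult_nth)
  also have "\<dots> = sum (\<lambda>k. ?f (?n + 0 - k)) {0..?n}" by (rule sum.atLeastAtMost_rev)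
  also have "\<dots> = bpoly p 1 s"
    unfolding bpoly_def y_def[symmetric]
  proof (rule sum.cong)
    fix x assume "x \<in> {0..?n}"
    hence e: "?n - (?n + 0 - x) = x" by auto
    show "?f (?n + 0 - x) = smult (y ^ x)
        (pbinom (smult (of_nat 1) alpha - 1) (?n - x) * pbinom (smult (of_nat s) alpha - 1) x)"
      unfolding e by (simp add: const_pow mult_ac)
  qed simp
  finally show ?thesis ..
qed


lemma bpoly_degree:
  assumes card: "card (UNIV::'a::field set) = p" and pr: "prime p" and s: "0 < s" "s < p"
  shows "degree (bpoly p 1 s :: 'a poly) \<le> (p - 1) div 2"
proof -
  define y :: 'a where "y = - (of_nat 1 / of_nat s)"
  have nz: "\<And>j. 0 < j \<Longrightarrow> j < p \<Longrightarrow> of_nat j \<noteq> (0::'a)" using char_nz[OF card pr] by blast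
  have sy: "y * of_nat s = -1" using nz[OF s] by (simp add: y_def)
  have e1: "(alpha - 1) + [:y:] * (smult (of_nat s) alpha - 1) = [:-1 - y:]"
    using sy by (simp add: alpha_def algebra_simps flip: pCons_one)
  have d1: "degree ((alpha - 1) + [:y:] * (smult (of_nat s) alpha - 1)) = 0" unfolding e1 by simp
  have d2: "degree ([:y:] * ((alpha - 1) + (smult (of_nat s) alpha - 1))) \<le> 1"
    by (simp add: alpha_def) (intro impI degree_diff_le; simp)
  have dY: "degree [:y:] = 0" by simp
  have "p - 1 + 1 \<le> p" using s by simp
  note db = deg_bound[where p=p and u="alpha - 1" and v="smult (of_nat s) alpha - 1" and Y="[:y:]" and N="p - 1",
     OF nz d1 dY d2 this]
  show ?thesis using db by (subst bpoly_eq_h) (simp add: y_def)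
qed


lemma pbinom_root:
  assumes "poly x a = of_nat A" "A < m"
  shows "poly (pbinom x m) (a::'a::field) = 0"
proof -
  have "(\<Prod>i<m. poly x a - of_nat i) = 0"
    using assms by (intro prod_zero) auto
  thus ?thesis by (simp add: pbinom_def poly_prod)
qed

lemma bpoly_root:
  assumes card: "card (UNIV::'a::field set) = p" and pr: "prime p" and s: "0 < s" "s < p"
    and j: "0 < j" "j < p" and cond: "j + (s * j mod p) \<le> p"
  shows "poly (bpoly p 1 s :: 'a poly) (of_nat j) = 0"
proof -
  have cp: "of_nat p = (0::'a)" by (rule char_p[OF card pr])
  have nd: "\<not> p dvd s * j" using pr s j by (simp add: prime_dvd_mult_iff nat_dvd_not_less)
  hence m0: "s * j mod p > 0" by (simp add: dvd_eq_mod_eq_0)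
  define A where "A = j - 1"
  define B where "B = s * j mod p - 1"
  have pa: "poly (alpha - 1) (of_nat j :: 'a) = of_nat A"
    using j by (simp add: alpha_def A_def of_nat_diff)
  have e: "(of_nat (p * (s * j div p) + s * j mod p) :: 'a) = of_nat (s * j mod p)"
    by (simp only: of_nat_add of_nat_mult cp mult_zero_left add_0)
  have sj: "(of_nat (s * j) :: 'a) = of_nat (s * j mod p)"
    using e by (metis div_mult_mod_eq mult.commute)
  have pb: "poly (smult (of_nat s) alpha - 1) (of_nat j :: 'a) = of_nat B"
    using m0 sj by (simp add: alpha_def B_def of_nat_diff mult.commute)
  have AB: "A + B + 2 \<le> p" using cond m0 j by (simp add: A_def B_def)
  show ?thesis
    unfolding bpoly_def poly_sum
  proof (intro sum.neutral ballI)
    fix k assume k: "k \<in> {0..p-1}"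
    show "poly (smult ((- (of_nat 1 / of_nat s)) ^ k)
              (pbinom (smult (of_nat 1) alpha - 1) (p - 1 - k) * pbinom (smult (of_nat s) alpha - 1) k))
              (of_nat j :: 'a) = 0"
    proof (cases "k \<le> B")
      case True
      hence "A < p - 1 - k" using AB by linarith
      hence "poly (pbinom (alpha - 1) (p - 1 - k)) (of_nat j :: 'a) = 0" by (rule pbinom_root[OF pa])
      hence "poly (pbinom (smult (of_nat 1) alpha - 1) (p - 1 - k)) (of_nat j :: 'a) = 0" by simp
      thus ?thesis unfolding poly_smult poly_mult by (metis mult_zero_left mult_zero_right)
    next
      case False
      hence "poly (pbinom (smult (of_nat s) alpha - 1) k) (of_nat j :: 'a) = 0"
        by (intro pbinom_root[OF pb]) simp
      thus ?thesis unfolding poly_smult poly_mult by (metis mult_zero_left mult_zero_right)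
    qed
  qed
qed


lemma mid_mult:
  assumes "(x::nat) mod p = 0" "0 < x" "x < 2 * p"
  shows "x = p"
proof -
  obtain q where q: "x = p * q" using assms(1) by (auto simp: mod_eq_0_iff_dvd elim: dvdE)
  have "q > 0" using q assms(2) by (cases q) auto
  moreover have "q < 2" using q assms(3) by (metis mult.commute mult_less_cancel2)
  ultimately have "q = 1" by linarith
  thus ?thesis using q by simp
qed

lemma count_R:
  assumes pr: "prime p" and s: "0 < s" "s < p"
  shows "p - 1 \<le> 2 * card {j \<in> {1..p-1}. j + (s * j mod p) \<le> p}"
proof -
  define R where "R = {j \<in> {1..p-1}. j + (s * j mod p) \<le> p}"
  have nd: "s * j mod p > 0" if "0 < j" "j < p" for j
  proof -
    have "\<not> p dvd s * j" using pr s that by (simp add: prime_dvd_mult_iff nat_dvd_not_less)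
    thus ?thesis by (simp add: dvd_eq_mod_eq_0)
  qed
  have sub: "{1..p-1} \<subseteq> R \<union> (\<lambda>j. p - j) ` R"
  proof
    fix j assume jm: "j \<in> {1..p-1}"
    show "j \<in> R \<union> (\<lambda>j. p - j) ` R"
    proof (cases "j \<in> R")
      case False
      hence big: "j + (s * j mod p) > p" using jm by (simp add: R_def)
      have j: "0 < j" "j < p" using jm pr prime_gt_1_nat by auto
      have a: "s * j mod p > 0" using nd[OF j] .
      have b: "s * (p - j) mod p > 0" using nd[of "p - j"] j by simp
      have "(s * (p - j) mod p + s * j mod p) mod p = (s * (p - j) + s * j) mod p" by (simp add: mod_add_eq)
      also have "s * (p - j) + s * j = s * p" using j by (simp add: diff_mult_distrib2)
      finally have "(s * (p - j) mod p + s * j mod p) mod p = 0" by simp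
      moreover have "s * (p - j) mod p + s * j mod p < 2 * p" using pr
        by (metis mult_2 add_less_mono mod_less_divisor prime_gt_0_nat)
      ultimately have "s * (p - j) mod p + s * j mod p = p" using a b mid_mult by simp
      hence "p - j \<in> R" using big j by (auto simp: R_def)
      moreover have "j = p - (p - j)" using j by simp
      ultimately show ?thesis by blast
    qed simp
  qed
  have "card {1..p-1} \<le> card (R \<union> (\<lambda>j. p - j) ` R)"
    by (rule card_mono[OF _ sub]) (simp add: R_def)
  also have "\<dots> \<le> card R + card ((\<lambda>j. p - j) ` R)" by (rule card_Un_le)
  also have "\<dots> \<le> card R + card R" using card_image_le[of R "\<lambda>j. p - j"] by (simp add: R_def)
  finally show ?thesis unfolding R_def by simp
qed


lemma prod_dvd_vanish:
  assumes "finite S" "\<forall>a\<in>S. poly f a = (0::'a::idom)"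
  shows "(\<Prod>a\<in>S. [:-a, 1:]) dvd f"
  using assms
proof (induction S arbitrary: f rule: finite_induct)
  case empty
  then show ?case by simp
next
  case (insert a S)
  obtain g where g: "f = (\<Prod>b\<in>S. [:-b, 1:]) * g" using insert by (meson dvdE insertCI)
  have "poly (\<Prod>b\<in>S. [:-b, 1:]) a \<noteq> 0" using insert(1,2) by (auto simp: poly_prod)
  moreover have "poly f a = 0" using insert by simp
  ultimately have "poly g a = 0" using g by simp
  hence "[:-a, 1:] dvd g" by (simp add: poly_eq_0_iff_dvd)
  hence "(\<Prod>b\<in>S. [:-b, 1:]) * [:-a, 1:] dvd f" unfolding g by (rule mult_dvd_mono[OF dvd_refl])
  thus ?case using insert(1,2) by (simp add: mult.commute)
qed

lemma bpoly_dvd: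
  assumes card: "card (UNIV::'a::field set) = p" and pr: "prime p" and s: "0 < s" "s < p"
  shows "bpoly p 1 s = (0::'a poly) \<or> (bpoly p 1 s :: 'a poly) dvd (alpha ^ (p - 1) - 1)"
proof (cases "bpoly p 1 s = (0::'a poly)")
  case True
  then show ?thesis by simp
next
  case False
  note b0 = False
  define R where "R = {j \<in> {1..p-1}. j + (s * j mod p) \<le> p}"
  define Rt where "Rt = (of_nat ` R :: 'a set)"
  let ?b = "bpoly p 1 s :: 'a poly"
  let ?D = "alpha ^ (p - 1) - 1 :: 'a poly"
  have nz: "\<And>j. 0 < j \<Longrightarrow> j < p \<Longrightarrow> of_nat j \<noteq> (0::'a)" using char_nz[OF card pr] by blast
  have finR: "finite R" by (simp add: R_def)
  have inj: "inj_on (of_nat :: nat \<Rightarrow> 'a) R"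
  proof (rule inj_onI)
    fix i j assume ij: "i \<in> R" "j \<in> R" "(of_nat i :: 'a) = of_nat j"
    show "i = j"
    proof (rule ccontr)
      assume "i \<noteq> j"
      hence "i < j \<or> j < i" by auto
      thus False
      proof
        assume "i < j"
        hence "(of_nat (j - i) :: 'a) = 0" using ij by (simp add: of_nat_diff)
        moreover have "j - i < p" "0 < j - i" using ij \<open>i < j\<close> by (auto simp: R_def)
        ultimately show False using nz by blast
      next
        assume "j < i"
        hence "(of_nat (i - j) :: 'a) = 0" using ij by (simp add: of_nat_diff)
        moreover have "i - j < p" "0 < i - j" using ij \<open>j < i\<close> by (auto simp: R_def)
        ultimately show False using nz by blast
      qed
    qed
  qed
  have cardRt: "card Rt = card R" unfolding Rt_def using inj by (rule card_image)
  have "p - 1 \<le> 2 * card R" unfolding R_def by (rule count_R[OF pr s])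
  hence degb: "degree ?b \<le> card Rt"
    using bpoly_degree[OF card pr s] cardRt by linarith
  have finRt: "finite Rt" unfolding Rt_def using finR by simp
  have rootb: "\<forall>a\<in>Rt. poly ?b a = 0"
    unfolding Rt_def R_def using bpoly_root[OF card pr s] by auto
  have rootD: "\<forall>a\<in>Rt. poly ?D a = 0"
  proof
    fix a assume "a \<in> Rt"
    then obtain j where j: "j \<in> R" "a = of_nat j" unfolding Rt_def by auto
    have "j < p" using j(1) prime_gt_1_nat[OF pr] by (auto simp: R_def)
    hence "a \<noteq> 0" using nz[of j] j by (auto simp: R_def)
    thus "poly ?D a = 0" using fermat_field[OF card pr] by (simp add: alpha_def)
  qed
  define P where "P = (\<Prod>a\<in>Rt. [:-a, 1:])"
  have Pb: "P dvd ?b" unfolding P_def by (rule prod_dvd_vanish[OF finRt rootb])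
  have PD: "P dvd ?D" unfolding P_def by (rule prod_dvd_vanish[OF finRt rootD])
  obtain g where g: "?b = P * g" using Pb by (elim dvdE)
  obtain q where q: "?D = P * q" using PD by (elim dvdE)
  have P0: "P \<noteq> 0" and g0: "g \<noteq> 0" using g b0 by auto
  have degP: "degree P = card Rt"
    unfolding P_def using finRt by (simp add: degree_prod_eq_sum_degree)
  have "degree ?b = degree P + degree g" using g P0 g0 by (simp add: degree_mult_eq)
  hence "degree g = 0" using degb degP by simp
  then obtain c where c: "g = [:c:]" by (metis degree_eq_zeroE)
  have c0: "c \<noteq> 0" using g0 c by simp
  have "?b * smult (inverse c) q = ?D"
    unfolding g q c using c0 by (simp add: mult_ac)
  hence "?b dvd ?D" by (metis dvd_triv_left)
  thus ?thesis by blast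
qed


lemma prod_emb: "finite S \<Longrightarrow> (\<Prod>s\<in>S. emb (f s)) = emb (\<Prod>s\<in>S. f s)"
  by (induction S rule: finite_induct) (simp_all add: emb_def One_fract_def)

lemma loc_ring_memI: "Fract f ((alpha ^ (p - 1) - 1) ^ n) \<in> loc_ring p"
  unfolding loc_ring_def by blast

lemma loc_ring_zero: "0 \<in> loc_ring p"
  using loc_ring_memI[of 0 p 0] by (simp add: Zero_fract_def eq_fract(3))

lemma loc_ring_uminus:
  assumes "x \<in> loc_ring p" shows "- x \<in> loc_ring p"
proof -
  obtain f n where "x = Fract f ((alpha ^ (p - 1) - 1) ^ n)" using assms unfolding loc_ring_def by blast
  hence "- x = Fract (- f) ((alpha ^ (p - 1) - 1) ^ n)" by simp
  thus ?thesis using loc_ring_memI by metis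
qed

lemma key_coeff:
  assumes card: "card (UNIV::'a::field set) = p" and pr: "prime p" and k: "0 < k" "k < p"
  shows "(inverse (of_nat k) / (\<Prod>s = 1..k-1. emb (bpoly p 1 s)) :: 'a poly fract) \<in> loc_ring p"
proof -
  let ?D = "alpha ^ (p - 1) - 1 :: 'a poly"
  define Q where "Q = (\<Prod>s = 1..k-1. bpoly p 1 s :: 'a poly)"
  have eQ: "(\<Prod>s = 1..k-1. emb (bpoly p 1 s)) = (emb Q :: 'a poly fract)" unfolding Q_def by (simp add: prod_emb)
  show ?thesis
  proof (cases "Q = 0")
    case True
    then show ?thesis unfolding eQ using loc_ring_zero by (simp add: emb_def Zero_fract_def[symmetric])
  next
    case False
    have dv: "bpoly p 1 s dvd ?D" if "s \<in> {1..k-1}" for s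
    proof -
      have "bpoly p 1 s \<noteq> (0::'a poly)" using False that unfolding Q_def by auto
      moreover have "0 < s" "s < p" using that k by auto
      ultimately show ?thesis using bpoly_dvd[OF card pr] by blast
    qed
    have "Q dvd (\<Prod>s = 1..k-1. ?D)" unfolding Q_def by (rule prod_dvd_prod) (rule dv)
    then obtain g where g: "?D ^ (k - 1) = Q * g" by (auto elim: dvdE)
    have nzk: "(of_nat k :: 'a) \<noteq> 0" using char_nz[OF card pr k] .
    have p2: "p - 1 \<noteq> 0" using prime_gt_1_nat[OF pr] by simp
    have "poly ?D 0 = 0 ^ (p - 1) - 1" by (simp only: poly_diff poly_power poly_1) (simp add: alpha_def)
    hence pD: "poly ?D 0 = -1" using p2 by simp
    have D0: "?D \<noteq> 0"
    proof
      assume "?D = 0"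
      hence "poly ?D 0 = 0" by (simp only: poly_0)
      thus False using pD by simp
    qed
    have kQ: "(of_nat k :: 'a poly) * Q \<noteq> 0" using False nzk by (simp add: of_nat_poly)
    have "(inverse (of_nat k) / emb Q :: 'a poly fract) = Fract 1 (of_nat k * Q)"
      by (simp add: emb_def of_nat_fract)
    also have "\<dots> = Fract (smult (inverse (of_nat k)) g) (?D ^ (k - 1))"
    proof (subst eq_fract(1)[OF kQ])
      show "?D ^ (k - 1) \<noteq> 0" using D0 by simp
      have "smult (inverse (of_nat k)) g * (of_nat k * Q) = smult (inverse (of_nat k) * of_nat k) (Q * g)"
        by (simp add: of_nat_poly mult_ac)
      also have "\<dots> = ?D ^ (k - 1)" using nzk g by simp
      finally show "1 * ?D ^ (k - 1) = smult (inverse (of_nat k)) g * (of_nat k * Q)" by simp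
    qed
    finally show ?thesis unfolding eQ using loc_ring_memI by metis
  qed
qed

theorem theorem5:
  fixes p :: nat
  assumes "prime p" and "odd p" and "card (UNIV :: 'a::field set) = p"
  shows "\<forall>i. coeff (Gpoly p :: 'a poly fract poly) i \<in> loc_ring p"
proof
  fix i
  have "coeff (Gpoly p :: 'a poly fract poly) i
     = - (\<Sum>k = 1..p-1. if k = i then inverse (of_nat k) / (\<Prod>s = 1..k-1. emb (bpoly p 1 s)) else 0)"
    unfolding Gpoly_def by (simp add: coeff_sum coeff_monom)
  also have "\<dots> = - (if i \<in> {1..p-1} then inverse (of_nat i) / (\<Prod>s = 1..i-1. emb (bpoly p 1 s)) else 0)"
    by (simp add: sum.delta')
  finally have e: "coeff (Gpoly p :: 'a poly fract poly) i = \<dots>" .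
  show "coeff (Gpoly p :: 'a poly fract poly) i \<in> loc_ring p"
  proof (cases "i \<in> {1..p-1}")
    case True
    hence "0 < i" "i < p" using prime_gt_1_nat[OF assms(1)] by auto
    have "inverse (of_nat i) / (\<Prod>s = 1..i-1. emb (bpoly p 1 s)) \<in> (loc_ring p :: 'a poly fract set)"
      by (rule key_coeff[OF assms(3,1)]) fact+
    from loc_ring_uminus[OF this] show ?thesis unfolding e using True by simp
  next
    case False
    then show ?thesis unfolding e if_not_P[OF False] using loc_ring_zero by simp
  qed
qed

end
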